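(* Let $D$ be a diagram of a link $L$, fix $a^*\in A(D)$, and let $M_0$ be the $\Lambda$-submodule of $M_A^{red}(L)$ generated by the elements $(\gamma_D(a)-\gamma_D(a^* ))\otimes1$, $a\in A(D)$. Then there is a $\Lambda$-linear epimorphism $e_D:M_0\to Dis(MQ(L))$ with $e_D((\gamma_D(a)-\gamma_D(a^* ))\otimes1)=d_a=\beta_a\beta_{a^*}^{-1}$ for all $a\in A(D)$, where $Dis(MQ(L))$ carries the $\Lambda$-module structure $m\cdot d=d^m$, $t^n\cdot d=\beta_{a^*}^nd\beta_{a^*}^{-n}$ ($m,n\in\mathbb Z$), written additively.
   Context: Let $L=K_1\cup\dots\cup K_\mu$ be an oriented classical link with diagram $D$. $A(D)$ is the set of arcs of $D$ and $C(D)$ the set of crossings; $\kappa_D:A(D)\to\{1,\dots,\mu\}$ sends an arc to the index of its component. At a crossing $c$, $a_1$ is the overpassing arc, $a_2$ the underpassing arc on the right of $a_1$ (with respect to the orientation of $a_1$), $a_3$ the underpassing arc on the left of $a_1$. $\Lambda_\mu=\mathbb Z[t_1^{\pm1},\dots,t_\mu^{\pm1}]$, $\Lambda=\mathbb Z[t^{\pm1}]$, $\tau:\Lambda_\mu\to\Lambda$ the ring homomorphism with $\tau(t_i)=t$, making $\Lambda$ a $\Lambda_\mu$-module. $\rho_D:\Lambda_\mu^{C(D)}\to\Lambda_\mu^{A(D)}$ is the $\Lambda_\mu$-linear map with $\rho_D(c)=(1-t_{\kappa_D(a_2)})a_1+t_{\kappa_D(a_1)}a_2-a_3$; $M_A(L)=\operatorname{coker}\rho_D$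 with quotient map $\gamma_D$; $M_A^{red}(L)=M_A(L)\otimes_{\Lambda_\mu}\Lambda$. A quandle is a set $Q$ with a binary operation $\triangleright$ such that $x\triangleright x=x$, each translation $\beta_y(x)=x\triangleright y$ is a bijection, and $(x\triangleright y)\triangleright z=(x\triangleright z)\triangleright(y\triangleright z)$; it is medial if $(w\triangleright x)\triangleright(y\triangleright z)=(w\triangleright y)\triangleright(x\triangleright z)$. The displacement group $Dis(Q)$ is the subgroup of the automorphism group of $Q$ generated by all $\beta_y\beta_z^{-1}$ (abelian for medial $Q$). $MQ(L)$ is the medial quandle generated by $A(D)$ subject to $a_2\triangleright a_1=a_3$ at every crossing. *)

theory Defs
  imports "HOL-Library.Poly_Mapping" "HOL-Library.Function_Algebras" "HOL-Algebra.Bij" "HOL-Algebra.Generated_Groups"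
begin

text \<open>Lambda = Z[t,t^-1] is the integral group ring of (int,+): finitely supported
  int-valued functions on int, with convolution product. Lambda_mu = Z[t_1^pm,...,t_mu^pm]
  is the group ring of Z^mu, with exponent vectors (nat =>0 int) (variables indexed by
  1..mu).\<close>

type_synonym laurent = "int \<Rightarrow>\<^sub>0 int"
type_synonym mlaurent = "(nat \<Rightarrow>\<^sub>0 int) \<Rightarrow>\<^sub>0 int"

definition lt :: laurent where "lt = Poly_Mapping.single 1 1"

definition mlt :: "nat \<Rightarrow> mlaurent" where
  "mlt i = Poly_Mapping.single (Poly_Mapping.single i 1) 1"

text \<open>tau : Lambda_mu -> Lambda, t_i |-> t  (monomial t^m |-> t^(sum of exponents)).\<close>
definition tau :: "mlaurent \<Rightarrow> laurent" where
  "tau p = (\<Sum>m\<in>Poly_Mapping.keys p. Poly_Mapping.single (\<Sum>i\<in>Poly_Mapping.keys m. Poly_Mapping.lookup m i) (Poly_Mapping.lookup p m))"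

text \<open>A diagram is given combinatorially: arcs form a finite type 'a, crossings a finite
  type 'c; at a crossing c, a1 c is the overpassing arc, a2 c the underpassing arc on the
  right of a1 c, a3 c the underpassing arc on the left; kappa gives the component index.\<close>

definition delta :: "'a \<Rightarrow> 'a \<Rightarrow> 'r::{zero,one}" where
  "delta a = (\<lambda>x. if x = a then 1 else 0)"

definition vscale :: "'r::times \<Rightarrow> ('a \<Rightarrow> 'r) \<Rightarrow> ('a \<Rightarrow> 'r)" where
  "vscale l v = (\<lambda>x. l * v x)"

definition rhoD :: "('a \<Rightarrow> nat) \<Rightarrow> ('c \<Rightarrow> 'a) \<Rightarrow> ('c \<Rightarrow> 'a) \<Rightarrow> ('c \<Rightarrow> 'a)
    \<Rightarrow> 'c \<Rightarrow> 'a \<Rightarrow> mlaurent" where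
  "rhoD kappa a1 a2 a3 c =
     vscale (1 - mlt (kappa (a2 c))) (delta (a1 c)) + vscale (mlt (kappa (a1 c))) (delta (a2 c))
     - delta (a3 c)"

definition relsub :: "('a \<Rightarrow> nat) \<Rightarrow> ('c::finite \<Rightarrow> 'a) \<Rightarrow> ('c \<Rightarrow> 'a) \<Rightarrow> ('c \<Rightarrow> 'a)
    \<Rightarrow> ('a \<Rightarrow> laurent) set" where
  "relsub kappa a1 a2 a3 =
     range (\<lambda>lam::'c \<Rightarrow> laurent. \<Sum>c\<in>UNIV. vscale (lam c) (tau \<circ> rhoD kappa a1 a2 a3 c))"

text \<open>Class of v in M_A^red(L) = coker(rho_D (x) Lambda) = M_A(L) (x) Lambda.\<close>
definition mcls :: "('a \<Rightarrow> nat) \<Rightarrow> ('c::finite \<Rightarrow> 'a) \<Rightarrow> ('c \<Rightarrow> 'a) \<Rightarrow> ('c \<Rightarrow> 'a)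
    \<Rightarrow> ('a \<Rightarrow> laurent) \<Rightarrow> ('a \<Rightarrow> laurent) set" where
  "mcls kappa a1 a2 a3 v = {v + r | r. r \<in> relsub kappa a1 a2 a3}"

definition Mred :: "('a \<Rightarrow> nat) \<Rightarrow> ('c::finite \<Rightarrow> 'a) \<Rightarrow> ('c \<Rightarrow> 'a) \<Rightarrow> ('c \<Rightarrow> 'a)
    \<Rightarrow> ('a \<Rightarrow> laurent) set set" where
  "Mred kappa a1 a2 a3 = range (mcls kappa a1 a2 a3)"

definition madd :: "('a \<Rightarrow> nat) \<Rightarrow> ('c::finite \<Rightarrow> 'a) \<Rightarrow> ('c \<Rightarrow> 'a) \<Rightarrow> ('c \<Rightarrow> 'a)
    \<Rightarrow> ('a \<Rightarrow> laurent) set \<Rightarrow> ('a \<Rightarrow> laurent) set \<Rightarrow> ('a \<Rightarrow> laurent) set" where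
  "madd kappa a1 a2 a3 X Y = mcls kappa a1 a2 a3 ((SOME x. x \<in> X) + (SOME y. y \<in> Y))"

definition msmult :: "('a \<Rightarrow> nat) \<Rightarrow> ('c::finite \<Rightarrow> 'a) \<Rightarrow> ('c \<Rightarrow> 'a) \<Rightarrow> ('c \<Rightarrow> 'a)
    \<Rightarrow> laurent \<Rightarrow> ('a \<Rightarrow> laurent) set \<Rightarrow> ('a \<Rightarrow> laurent) set" where
  "msmult kappa a1 a2 a3 l X = mcls kappa a1 a2 a3 (vscale l (SOME x. x \<in> X))"

definition M0 :: "('a::finite \<Rightarrow> nat) \<Rightarrow> ('c::finite \<Rightarrow> 'a) \<Rightarrow> ('c \<Rightarrow> 'a) \<Rightarrow> ('c \<Rightarrow> 'a)
    \<Rightarrow> 'a \<Rightarrow> ('a \<Rightarrow> laurent) set set" where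
  "M0 kappa a1 a2 a3 astar =
     {mcls kappa a1 a2 a3 (\<Sum>a\<in>UNIV. vscale (lam a) (delta a - delta astar)) | lam. True}"

text \<open>Terms in the signature of quandles: x |> y and the right division x |>^-1 y
  (so that beta_y has inverse x |-> x |>^-1 y).\<close>
datatype 'a qterm = Gen 'a | Op "'a qterm" "'a qterm" | OpInv "'a qterm" "'a qterm"

inductive mq_eq :: "('c \<Rightarrow> 'a) \<Rightarrow> ('c \<Rightarrow> 'a) \<Rightarrow> ('c \<Rightarrow> 'a) \<Rightarrow> 'a qterm \<Rightarrow> 'a qterm \<Rightarrow> bool"
  for a1 a2 a3 where
  refl: "mq_eq a1 a2 a3 x x"
| sym: "mq_eq a1 a2 a3 x y \<Longrightarrow> mq_eq a1 a2 a3 y x"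
| trans: "mq_eq a1 a2 a3 x y \<Longrightarrow> mq_eq a1 a2 a3 y z \<Longrightarrow> mq_eq a1 a2 a3 x z"
| cong_Op: "mq_eq a1 a2 a3 x x' \<Longrightarrow> mq_eq a1 a2 a3 y y' \<Longrightarrow> mq_eq a1 a2 a3 (Op x y) (Op x' y')"
| cong_OpInv: "mq_eq a1 a2 a3 x x' \<Longrightarrow> mq_eq a1 a2 a3 y y' \<Longrightarrow>
      mq_eq a1 a2 a3 (OpInv x y) (OpInv x' y')"
| idem: "mq_eq a1 a2 a3 (Op x x) x"
| inv1: "mq_eq a1 a2 a3 (Op (OpInv x y) y) x"
| inv2: "mq_eq a1 a2 a3 (OpInv (Op x y) y) x"
| distr: "mq_eq a1 a2 a3 (Op (Op x y) z) (Op (Op x z) (Op y z))"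
| medial: "mq_eq a1 a2 a3 (Op (Op w x) (Op y z)) (Op (Op w y) (Op x z))"
| crossing: "mq_eq a1 a2 a3 (Op (Gen (a2 c)) (Gen (a1 c))) (Gen (a3 c))"

definition mq_rel :: "('c \<Rightarrow> 'a) \<Rightarrow> ('c \<Rightarrow> 'a) \<Rightarrow> ('c \<Rightarrow> 'a) \<Rightarrow> ('a qterm \<times> 'a qterm) set" where
  "mq_rel a1 a2 a3 = {(x, y). mq_eq a1 a2 a3 x y}"

definition MQ :: "('c \<Rightarrow> 'a) \<Rightarrow> ('c \<Rightarrow> 'a) \<Rightarrow> ('c \<Rightarrow> 'a) \<Rightarrow> 'a qterm set set" where
  "MQ a1 a2 a3 = UNIV // mq_rel a1 a2 a3"

definition mq_gen :: "('c \<Rightarrow> 'a) \<Rightarrow> ('c \<Rightarrow> 'a) \<Rightarrow> ('c \<Rightarrow> 'a) \<Rightarrow> 'a \<Rightarrow> 'a qterm set" where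
  "mq_gen a1 a2 a3 a = mq_rel a1 a2 a3 `` {Gen a}"

definition mq_op :: "('c \<Rightarrow> 'a) \<Rightarrow> ('c \<Rightarrow> 'a) \<Rightarrow> ('c \<Rightarrow> 'a)
    \<Rightarrow> 'a qterm set \<Rightarrow> 'a qterm set \<Rightarrow> 'a qterm set" where
  "mq_op a1 a2 a3 X Y = mq_rel a1 a2 a3 `` {Op (SOME x. x \<in> X) (SOME y. y \<in> Y)}"

definition beta :: "('c \<Rightarrow> 'a) \<Rightarrow> ('c \<Rightarrow> 'a) \<Rightarrow> ('c \<Rightarrow> 'a)
    \<Rightarrow> 'a qterm set \<Rightarrow> 'a qterm set \<Rightarrow> 'a qterm set" where
  "beta a1 a2 a3 Y = (\<lambda>X\<in>MQ a1 a2 a3. mq_op a1 a2 a3 X Y)"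

abbreviation PermG :: "('c \<Rightarrow> 'a) \<Rightarrow> ('c \<Rightarrow> 'a) \<Rightarrow> ('c \<Rightarrow> 'a)
    \<Rightarrow> ('a qterm set \<Rightarrow> 'a qterm set) monoid" where
  "PermG a1 a2 a3 \<equiv> BijGroup (MQ a1 a2 a3)"

definition Dis :: "('c \<Rightarrow> 'a) \<Rightarrow> ('c \<Rightarrow> 'a) \<Rightarrow> ('c \<Rightarrow> 'a) \<Rightarrow> ('a qterm set \<Rightarrow> 'a qterm set) set" where
  "Dis a1 a2 a3 = generate (PermG a1 a2 a3)
     {beta a1 a2 a3 y \<otimes>\<^bsub>PermG a1 a2 a3\<^esub> inv\<^bsub>PermG a1 a2 a3\<^esub> (beta a1 a2 a3 z)
       | y z. y \<in> MQ a1 a2 a3 \<and> z \<in> MQ a1 a2 a3}"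

definition dgen :: "('c \<Rightarrow> 'a) \<Rightarrow> ('c \<Rightarrow> 'a) \<Rightarrow> ('c \<Rightarrow> 'a) \<Rightarrow> 'a \<Rightarrow> 'a
    \<Rightarrow> 'a qterm set \<Rightarrow> 'a qterm set" where
  "dgen a1 a2 a3 astar a = beta a1 a2 a3 (mq_gen a1 a2 a3 a)
      \<otimes>\<^bsub>PermG a1 a2 a3\<^esub> inv\<^bsub>PermG a1 a2 a3\<^esub> (beta a1 a2 a3 (mq_gen a1 a2 a3 astar))"

text \<open>Lambda-module structure on Dis(MQ(L)) (written additively, i.e. + is composition):
  m.d = d^m, t^n.d = beta_{a*}^n d beta_{a*}^-n, hence
  (sum_n c_n t^n).d = sum_n c_n (t^n.d) = prod_n (beta_{a*}^n d beta_{a*}^-n)^{c_n}.\<close>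
definition dis_smult :: "('c \<Rightarrow> 'a) \<Rightarrow> ('c \<Rightarrow> 'a) \<Rightarrow> ('c \<Rightarrow> 'a) \<Rightarrow> 'a \<Rightarrow> laurent
    \<Rightarrow> ('a qterm set \<Rightarrow> 'a qterm set) \<Rightarrow> ('a qterm set \<Rightarrow> 'a qterm set)" where
  "dis_smult a1 a2 a3 astar l d =
    (let G = PermG a1 a2 a3; b = beta a1 a2 a3 (mq_gen a1 a2 a3 astar) in
     foldr (\<lambda>n acc. ((b [^]\<^bsub>G\<^esub> n \<otimes>\<^bsub>G\<^esub> d \<otimes>\<^bsub>G\<^esub> b [^]\<^bsub>G\<^esub> (- n))
                        [^]\<^bsub>G\<^esub> (Poly_Mapping.lookup l n)) \<otimes>\<^bsub>G\<^esub> acc)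
       (sorted_list_of_set (Poly_Mapping.keys l)) \<one>\<^bsub>G\<^esub>)"

end

theory Submission
  imports Defs "HOL-Algebra.FiniteProduct"
begin

lemma (in group) cancL1: "x \<in> carrier G \<Longrightarrow> y \<in> carrier G \<Longrightarrow> inv x \<otimes> (x \<otimes> y) = y"
  by (simp add: m_assoc[symmetric])
lemma (in group) cancL2: "x \<in> carrier G \<Longrightarrow> y \<in> carrier G \<Longrightarrow> x \<otimes> (inv x \<otimes> y) = y"
  by (simp add: m_assoc[symmetric])

lemma (in group) comm_inv:
  assumes x: "x \<in> carrier G" and y: "y \<in> carrier G" and e: "x \<otimes> y = y \<otimes> x"
  shows "inv x \<otimes> y = y \<otimes> inv x"
proof -
  have "inv x \<otimes> y = inv x \<otimes> (y \<otimes> x) \<otimes> inv x" using x y by (simp add: m_assoc)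
  also have "\<dots> = inv x \<otimes> (x \<otimes> y) \<otimes> inv x" by (simp only: e)
  also have "\<dots> = y \<otimes> inv x" using x y by (simp add: m_assoc[symmetric])
  finally show ?thesis .
qed

lemma (in group) comm_mult:
  assumes x: "x \<in> carrier G" and y: "y \<in> carrier G" and z: "z \<in> carrier G"
    and e1: "x \<otimes> z = z \<otimes> x" and e2: "y \<otimes> z = z \<otimes> y"
  shows "(x \<otimes> y) \<otimes> z = z \<otimes> (x \<otimes> y)"
proof -
  have "(x \<otimes> y) \<otimes> z = x \<otimes> (y \<otimes> z)" using x y z by (simp add: m_assoc)
  also have "\<dots> = x \<otimes> (z \<otimes> y)" by (simp only: e2)
  also have "\<dots> = (x \<otimes> z) \<otimes> y" using x y z by (simp add: m_assoc)
  also have "\<dots> = (z \<otimes> x) \<otimes> y" by (simp only: e1)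
  also have "\<dots> = z \<otimes> (x \<otimes> y)" using x y z by (simp add: m_assoc)
  finally show ?thesis .
qed

lemma (in group) gen_comm1:
  assumes H: "H \<subseteq> carrier G" and c: "\<And>x y. x \<in> H \<Longrightarrow> y \<in> H \<Longrightarrow> x \<otimes> y = y \<otimes> x"
  shows "x \<in> generate G H \<Longrightarrow> h \<in> H \<Longrightarrow> x \<otimes> h = h \<otimes> x"
proof (induction x rule: generate.induct)
  case one thus ?case using H by auto
next
  case (incl y) thus ?case using c by auto
next
  case (inv y)
  have "y \<in> carrier G" "h \<in> carrier G" using inv H by auto
  moreover have "y \<otimes> h = h \<otimes> y" using c inv by auto
  ultimately show ?case by (rule comm_inv)
next
  case (eng h1 h2)
  have "h1 \<in> carrier G" "h2 \<in> carrier G" "h \<in> carrier G" using eng H generate_in_carrier by auto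
  thus ?case by (rule comm_mult) (use eng in auto)
qed

lemma (in group) gen_comm:
  assumes H: "H \<subseteq> carrier G" and c: "\<And>x y. x \<in> H \<Longrightarrow> y \<in> H \<Longrightarrow> x \<otimes> y = y \<otimes> x"
    and x: "x \<in> generate G H"
  shows "y \<in> generate G H \<Longrightarrow> x \<otimes> y = y \<otimes> x"
proof (induction y rule: generate.induct)
  case one thus ?case using H generate_in_carrier x by auto
next
  case (incl y) thus ?case using gen_comm1[OF H c x, where h=y] by simp
next
  case (inv y)
  have "y \<in> carrier G" "x \<in> carrier G" using inv H generate_in_carrier x by auto
  moreover have "y \<otimes> x = x \<otimes> y" using gen_comm1[OF H c x, where h=y] inv by simp
  ultimately have "inv y \<otimes> x = x \<otimes> inv y" by (rule comm_inv)
  thus ?case by simp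
next
  case (eng h1 h2)
  have "h1 \<in> carrier G" "h2 \<in> carrier G" "x \<in> carrier G" using eng H generate_in_carrier x by auto
  hence "(h1 \<otimes> h2) \<otimes> x = x \<otimes> (h1 \<otimes> h2)" by (rule comm_mult) (use eng in auto)
  thus ?case by simp
qed

lemma (in group) gen_hom_closed:
  assumes H: "H \<subseteq> carrier G" and fc: "\<And>x. x \<in> carrier G \<Longrightarrow> f x \<in> carrier G"
    and fm: "\<And>x y. x \<in> carrier G \<Longrightarrow> y \<in> carrier G \<Longrightarrow> f (x \<otimes> y) = f x \<otimes> f y"
    and fi: "\<And>x. x \<in> carrier G \<Longrightarrow> f (inv x) = inv (f x)"
    and f1: "f \<one> = \<one>"
    and fH: "\<And>x. x \<in> H \<Longrightarrow> f x \<in> generate G H"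
  shows "x \<in> generate G H \<Longrightarrow> f x \<in> generate G H"
proof (induction x rule: generate.induct)
  case one thus ?case using f1 generate.one by simp
next
  case (incl y) thus ?case using fH by auto
next
  case (inv y)
  hence "y \<in> carrier G" "f y \<in> generate G H" using H fH by auto
  thus ?case using fi generate_m_inv_closed[OF H] by simp
next
  case (eng h1 h2)
  have "h1 \<in> carrier G" "h2 \<in> carrier G" using eng H generate_in_carrier by auto
  thus ?case using eng fm generate.eng by simp
qed

abbreviation deg :: "(nat \<Rightarrow>\<^sub>0 int) \<Rightarrow> int" where
  "deg m \<equiv> (\<Sum>i\<in>Poly_Mapping.keys m. Poly_Mapping.lookup m i)"

lemma tau_K: assumes "finite K" "Poly_Mapping.keys p \<subseteq> K"
  shows "tau p = (\<Sum>m\<in>K. Poly_Mapping.single (deg m) (Poly_Mapping.lookup p m))"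
  unfolding tau_def
  by (rule sum.mono_neutral_left[OF assms]) (auto simp: in_keys_iff)

lemma tau_add: "tau (p + q) = tau p + tau q"
proof -
  let ?K = "Poly_Mapping.keys p \<union> Poly_Mapping.keys q"
  have "tau (p + q) = (\<Sum>m\<in>?K. Poly_Mapping.single (deg m) (Poly_Mapping.lookup (p + q) m))"
    by (rule tau_K) (auto dest: keys_add[THEN subsetD])
  also have "\<dots> = (\<Sum>m\<in>?K. Poly_Mapping.single (deg m) (Poly_Mapping.lookup p m))
     + (\<Sum>m\<in>?K. Poly_Mapping.single (deg m) (Poly_Mapping.lookup q m))"
    by (simp add: lookup_add single_add sum.distrib)
  also have "\<dots> = tau p + tau q" by (simp add: tau_K[symmetric])
  finally show ?thesis .
qed

lemma tau_diff: "tau (p - q) = tau p - tau q"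
proof -
  let ?K = "Poly_Mapping.keys p \<union> Poly_Mapping.keys q"
  have "tau (p - q) = (\<Sum>m\<in>?K. Poly_Mapping.single (deg m) (Poly_Mapping.lookup (p - q) m))"
    by (rule tau_K) (auto dest: keys_diff[THEN subsetD])
  also have "\<dots> = (\<Sum>m\<in>?K. Poly_Mapping.single (deg m) (Poly_Mapping.lookup p m))
     - (\<Sum>m\<in>?K. Poly_Mapping.single (deg m) (Poly_Mapping.lookup q m))"
    by (simp add: lookup_minus single_diff sum_subtractf)
  also have "\<dots> = tau p - tau q" by (simp add: tau_K[symmetric])
  finally show ?thesis .
qed

lemma tau_0: "tau 0 = 0" by (simp add: tau_def)

lemma tau_1: "tau 1 = 1" by (simp add: tau_def)

lemma tau_mlt: "tau (mlt i) = lt" by (simp add: tau_def mlt_def lt_def)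

lemma tau_rho: "tau \<circ> rhoD kappa a1 a2 a3 c =
   vscale (1 - lt) (delta (a1 c)) + vscale lt (delta (a2 c)) - delta (a3 c)"
proof
  fix x
  show "(tau \<circ> rhoD kappa a1 a2 a3 c) x = (vscale (1 - lt) (delta (a1 c)) + vscale lt (delta (a2 c)) - delta (a3 c)) x"
    by (simp add: rhoD_def vscale_def delta_def tau_add tau_diff tau_0 tau_1 tau_mlt)
qed

locale mqL =
  fixes a1 a2 a3 :: "'c::finite \<Rightarrow> 'a::finite" and astar :: 'a
begin

abbreviation "S \<equiv> MQ a1 a2 a3"
abbreviation "G \<equiv> BijGroup (MQ a1 a2 a3)"
abbreviation "R \<equiv> mq_rel a1 a2 a3"
abbreviation "eqm \<equiv> mq_eq a1 a2 a3"

definition cls :: "'a qterm \<Rightarrow> 'a qterm set" where "cls x = R `` {x}"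

lemma equivR: "equiv UNIV R"
  unfolding equiv_def refl_on_def sym_def trans_def mq_rel_def
  using mq_eq.refl mq_eq.sym mq_eq.trans by blast

lemma cls_in: "cls x \<in> S"
  unfolding cls_def MQ_def by (rule quotientI) simp

lemma MQ_cases: "X \<in> S \<Longrightarrow> (\<And>x. X = cls x \<Longrightarrow> P) \<Longrightarrow> P"
  unfolding MQ_def cls_def by (erule quotientE) blast

lemma cls_eq: "cls x = cls y \<longleftrightarrow> eqm x y"
  unfolding cls_def using eq_equiv_class_iff[OF equivR] by (simp add: mq_rel_def)

lemma some_cls: "eqm x (SOME z. z \<in> cls x)"
proof -
  have "x \<in> cls x" unfolding cls_def using equiv_class_self[OF equivR] by simp
  hence "(SOME z. z \<in> cls x) \<in> cls x" by (rule someI)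
  thus ?thesis unfolding cls_def mq_rel_def by simp
qed

lemma op_cls: "mq_op a1 a2 a3 (cls x) (cls y) = cls (Op x y)"
proof -
  have "eqm (Op (SOME z. z \<in> cls x) (SOME z. z \<in> cls y)) (Op x y)"
    by (rule mq_eq.cong_Op; rule mq_eq.sym; rule some_cls)
  thus ?thesis unfolding mq_op_def cls_def[symmetric] cls_eq .
qed

definition B :: "'a qterm \<Rightarrow> 'a qterm set \<Rightarrow> 'a qterm set" where
  "B y = beta a1 a2 a3 (cls y)"

lemma B_app: "B y (cls x) = cls (Op x y)"
  unfolding B_def beta_def using cls_in op_cls by simp

lemma B_Bij: "B y \<in> Bij S"
proof -
  have ext: "B y \<in> extensional S" unfolding B_def beta_def by simp
  have inj: "inj_on (B y) S"
  proof (rule inj_onI)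
    fix X Z assume "X \<in> S" "Z \<in> S" "B y X = B y Z"
    then obtain x z where "X = cls x" "Z = cls z" by (metis MQ_cases)
    with \<open>B y X = B y Z\<close> have "eqm (Op x y) (Op z y)" by (simp add: B_app cls_eq)
    hence "eqm (OpInv (Op x y) y) (OpInv (Op z y) y)" by (rule mq_eq.cong_OpInv[OF _ mq_eq.refl])
    hence "eqm x z" by (rule mq_eq.trans[OF mq_eq.sym[OF mq_eq.inv2] mq_eq.trans[OF _ mq_eq.inv2]])
    thus "X = Z" using \<open>X = cls x\<close> \<open>Z = cls z\<close> cls_eq by simp
  qed
  have img: "B y ` S = S"
  proof
    show "B y ` S \<subseteq> S"
    proof
      fix Y assume "Y \<in> B y ` S"
      then obtain X where "X \<in> S" "Y = B y X" by blast
      then obtain x where "X = cls x" by (metis MQ_cases)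
      thus "Y \<in> S" using \<open>Y = B y X\<close> B_app cls_in by simp
    qed
    show "S \<subseteq> B y ` S"
    proof
      fix X assume "X \<in> S"
      then obtain x where X: "X = cls x" by (metis MQ_cases)
      have "B y (cls (OpInv x y)) = X" unfolding B_app X cls_eq by (rule mq_eq.inv1)
      thus "X \<in> B y ` S" using cls_in by (metis image_eqI)
    qed
  qed
  show ?thesis unfolding Bij_def using ext inj img bij_betw_def by blast
qed

lemma grp: "group G" by (rule group_BijGroup)

lemma B_carr[simp]: "B y \<in> carrier G" using B_Bij by (simp add: BijGroup_def)

lemma mult_app: "f \<in> carrier G \<Longrightarrow> g \<in> carrier G \<Longrightarrow> X \<in> S \<Longrightarrow> (f \<otimes>\<^bsub>G\<^esub> g) X = f (g X)"
  by (simp add: BijGroup_def compose_def)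

lemma carr_eqI: "f \<in> carrier G \<Longrightarrow> g \<in> carrier G \<Longrightarrow> (\<And>x. f (cls x) = g (cls x)) \<Longrightarrow> f = g"
  apply (rule extensionalityI[where A=S])
    apply (simp_all add: BijGroup_def Bij_def)
  by (metis MQ_cases)

lemma B_cong: "eqm x y \<Longrightarrow> B x = B y"
  unfolding B_def using cls_eq[of x y] by simp

lemma F1': "B (Op x y) \<otimes>\<^bsub>G\<^esub> B y = B y \<otimes>\<^bsub>G\<^esub> B x"
  apply (rule carr_eqI)
    apply (simp_all add: group.subgroup_self grp monoid.m_closed group.is_monoid)
  apply (simp add: mult_app cls_in B_app cls_eq)
  by (meson mq_eq.distr mq_eq.sym)

lemma F3: "B (Op y z) \<otimes>\<^bsub>G\<^esub> B x = B (Op x z) \<otimes>\<^bsub>G\<^esub> B y"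
  apply (rule carr_eqI)
    apply (simp_all add: grp monoid.m_closed group.is_monoid)
  by (simp add: mult_app cls_in B_app cls_eq mq_eq.medial)


interpretation Gp: group G by (rule grp)

lemmas gsimps = Gp.m_assoc Gp.cancL1 Gp.cancL2 Gp.inv_mult_group Gp.r_inv Gp.l_inv

definition b where "b = B (Gen astar)"
definition D where "D x = B x \<otimes>\<^bsub>G\<^esub> inv\<^bsub>G\<^esub> b"
definition cj :: "int \<Rightarrow> ('a qterm set \<Rightarrow> 'a qterm set) \<Rightarrow> ('a qterm set \<Rightarrow> 'a qterm set)" where
  "cj n d = b [^]\<^bsub>G\<^esub> n \<otimes>\<^bsub>G\<^esub> d \<otimes>\<^bsub>G\<^esub> b [^]\<^bsub>G\<^esub> (- n)"

lemma b_carr[simp]: "b \<in> carrier G" unfolding b_def by simp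
lemma D_carr[simp]: "D x \<in> carrier G" unfolding D_def by simp
lemma cj_carr[simp]: "d \<in> carrier G \<Longrightarrow> cj n d \<in> carrier G" unfolding cj_def by simp

lemma F1: "B (Op x y) = B y \<otimes>\<^bsub>G\<^esub> B x \<otimes>\<^bsub>G\<^esub> inv\<^bsub>G\<^esub> B y"
proof -
  have "B (Op x y) = B (Op x y) \<otimes>\<^bsub>G\<^esub> B y \<otimes>\<^bsub>G\<^esub> inv\<^bsub>G\<^esub> B y" by (simp add: gsimps)
  also have "\<dots> = B y \<otimes>\<^bsub>G\<^esub> B x \<otimes>\<^bsub>G\<^esub> inv\<^bsub>G\<^esub> B y" by (simp only: F1')
  finally show ?thesis .
qed

lemma F2: "B (OpInv x y) = inv\<^bsub>G\<^esub> B y \<otimes>\<^bsub>G\<^esub> B x \<otimes>\<^bsub>G\<^esub> B y"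
proof -
  have "B x = B (Op (OpInv x y) y)" by (rule B_cong[OF mq_eq.sym[OF mq_eq.inv1]])
  hence "B x = B y \<otimes>\<^bsub>G\<^esub> B (OpInv x y) \<otimes>\<^bsub>G\<^esub> inv\<^bsub>G\<^esub> B y" by (simp add: F1)
  thus ?thesis by (simp add: gsimps)
qed

lemma Dcomm: "D y \<otimes>\<^bsub>G\<^esub> D x = D x \<otimes>\<^bsub>G\<^esub> D y"
proof -
  have "B (Op y (Gen astar)) \<otimes>\<^bsub>G\<^esub> B x = B (Op x (Gen astar)) \<otimes>\<^bsub>G\<^esub> B y" by (rule F3)
  hence "b \<otimes>\<^bsub>G\<^esub> (B y \<otimes>\<^bsub>G\<^esub> inv\<^bsub>G\<^esub> b \<otimes>\<^bsub>G\<^esub> B x) = b \<otimes>\<^bsub>G\<^esub> (B x \<otimes>\<^bsub>G\<^esub> inv\<^bsub>G\<^esub> b \<otimes>\<^bsub>G\<^esub> B y)"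
    by (simp add: F1 b_def gsimps)
  hence "B y \<otimes>\<^bsub>G\<^esub> inv\<^bsub>G\<^esub> b \<otimes>\<^bsub>G\<^esub> B x = B x \<otimes>\<^bsub>G\<^esub> inv\<^bsub>G\<^esub> b \<otimes>\<^bsub>G\<^esub> B y"
    by (simp add: Gp.Units_eq del: Gp.m_assoc)
  moreover have "D y \<otimes>\<^bsub>G\<^esub> D x = (B y \<otimes>\<^bsub>G\<^esub> inv\<^bsub>G\<^esub> b \<otimes>\<^bsub>G\<^esub> B x) \<otimes>\<^bsub>G\<^esub> inv\<^bsub>G\<^esub> b"
    "D x \<otimes>\<^bsub>G\<^esub> D y = (B x \<otimes>\<^bsub>G\<^esub> inv\<^bsub>G\<^esub> b \<otimes>\<^bsub>G\<^esub> B y) \<otimes>\<^bsub>G\<^esub> inv\<^bsub>G\<^esub> b"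
    by (simp_all add: D_def Gp.m_assoc)
  ultimately show ?thesis by simp
qed

lemma cj1: "d \<in> carrier G \<Longrightarrow> cj 1 d = b \<otimes>\<^bsub>G\<^esub> d \<otimes>\<^bsub>G\<^esub> inv\<^bsub>G\<^esub> b"
  unfolding cj_def by (simp add: Gp.int_pow_neg)
lemma cjm1: "d \<in> carrier G \<Longrightarrow> cj (-1) d = inv\<^bsub>G\<^esub> b \<otimes>\<^bsub>G\<^esub> d \<otimes>\<^bsub>G\<^esub> b"
  unfolding cj_def by (simp add: Gp.int_pow_neg)

lemma D_Op: "D (Op x y) = D y \<otimes>\<^bsub>G\<^esub> cj 1 (D x \<otimes>\<^bsub>G\<^esub> inv\<^bsub>G\<^esub> D y)"
  by (simp add: cj1 D_def F1 gsimps)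

lemma D_OpInv: "D (OpInv x y) = cj (-1) (inv\<^bsub>G\<^esub> D y \<otimes>\<^bsub>G\<^esub> D x) \<otimes>\<^bsub>G\<^esub> D y"
  by (simp add: cjm1 D_def F2 gsimps)

lemma cj1_D: "cj 1 (D x) = D (Op x (Gen astar))"
  by (simp add: cj1 D_def F1 gsimps b_def)
lemma cjm1_D: "cj (-1) (D x) = D (OpInv x (Gen astar))"
  by (simp add: cjm1 D_def F2 gsimps b_def)


definition GEN where "GEN = {D y \<otimes>\<^bsub>G\<^esub> inv\<^bsub>G\<^esub> D z | y z. True}"

lemma GEN_carr: "GEN \<subseteq> carrier G" unfolding GEN_def by auto

lemma mq_gen_cls: "mq_gen a1 a2 a3 a = cls (Gen a)" unfolding mq_gen_def cls_def by simp

lemma Dis_eq: "Dis a1 a2 a3 = generate G GEN"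
proof -
  have "{beta a1 a2 a3 y \<otimes>\<^bsub>G\<^esub> inv\<^bsub>G\<^esub> (beta a1 a2 a3 z) | y z. y \<in> S \<and> z \<in> S} = GEN"
  proof (intro equalityI subsetI)
    fix g assume "g \<in> {beta a1 a2 a3 y \<otimes>\<^bsub>G\<^esub> inv\<^bsub>G\<^esub> (beta a1 a2 a3 z) | y z. y \<in> S \<and> z \<in> S}"
    then obtain Y Z where g: "g = beta a1 a2 a3 Y \<otimes>\<^bsub>G\<^esub> inv\<^bsub>G\<^esub> (beta a1 a2 a3 Z)" "Y \<in> S" "Z \<in> S" by blast
    then obtain y z where "Y = cls y" "Z = cls z" by (metis MQ_cases)
    hence "g = B y \<otimes>\<^bsub>G\<^esub> inv\<^bsub>G\<^esub> B z" using g B_def by simp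
    also have "\<dots> = D y \<otimes>\<^bsub>G\<^esub> inv\<^bsub>G\<^esub> D z" by (simp add: D_def gsimps)
    finally show "g \<in> GEN" unfolding GEN_def by blast
  next
    fix g assume "g \<in> GEN"
    then obtain y z where g: "g = D y \<otimes>\<^bsub>G\<^esub> inv\<^bsub>G\<^esub> D z" unfolding GEN_def by blast
    also have "\<dots> = beta a1 a2 a3 (cls y) \<otimes>\<^bsub>G\<^esub> inv\<^bsub>G\<^esub> (beta a1 a2 a3 (cls z))"
      by (simp add: D_def gsimps B_def[symmetric])
    finally show "g \<in> {beta a1 a2 a3 y \<otimes>\<^bsub>G\<^esub> inv\<^bsub>G\<^esub> (beta a1 a2 a3 z) | y z. y \<in> S \<and> z \<in> S}"
      using cls_in by blast
  qed
  thus ?thesis unfolding Dis_def by simp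
qed

lemma Dis_sub: "subgroup (Dis a1 a2 a3) G"
  unfolding Dis_eq by (rule Gp.generate_is_subgroup[OF GEN_carr])

lemma Dis_carr: "d \<in> Dis a1 a2 a3 \<Longrightarrow> d \<in> carrier G"
  using subgroup.mem_carrier[OF Dis_sub] by blast

lemma D_star: "D (Gen astar) = \<one>\<^bsub>G\<^esub>" unfolding D_def b_def by simp

lemma D_Dis: "D y \<in> Dis a1 a2 a3"
proof -
  have "D y = D y \<otimes>\<^bsub>G\<^esub> inv\<^bsub>G\<^esub> D (Gen astar)" by (simp add: D_star)
  hence "D y \<in> GEN" unfolding GEN_def by blast
  thus ?thesis unfolding Dis_eq by (rule generate.incl)
qed

lemma Dis_comm: assumes "x \<in> Dis a1 a2 a3" "y \<in> Dis a1 a2 a3" shows "x \<otimes>\<^bsub>G\<^esub> y = y \<otimes>\<^bsub>G\<^esub> x"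
proof -
  have R: "range D \<subseteq> carrier G" by auto
  have "GEN \<subseteq> generate G (range D)"
  proof
    fix g assume "g \<in> GEN"
    then obtain y z where g: "g = D y \<otimes>\<^bsub>G\<^esub> inv\<^bsub>G\<^esub> D z" unfolding GEN_def by blast
    have "D y \<in> generate G (range D)" "D z \<in> generate G (range D)" by (auto intro: generate.incl)
    thus "g \<in> generate G (range D)" unfolding g
      by (intro generate.eng generate.inv) (auto intro: generate.incl)
  qed
  hence "Dis a1 a2 a3 \<subseteq> generate G (range D)"
    unfolding Dis_eq by (rule Gp.generate_subgroup_incl[OF _ Gp.generate_is_subgroup[OF R]])
  hence "x \<in> generate G (range D)" "y \<in> generate G (range D)" using assms by auto
  thus ?thesis by (rule Gp.gen_comm[OF R, rotated]) (auto intro: Dcomm)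
qed

lemma cj_mult: "x \<in> carrier G \<Longrightarrow> y \<in> carrier G \<Longrightarrow> cj n (x \<otimes>\<^bsub>G\<^esub> y) = cj n x \<otimes>\<^bsub>G\<^esub> cj n y"
  unfolding cj_def by (simp add: gsimps Gp.int_pow_neg)
lemma cj_inv: "x \<in> carrier G \<Longrightarrow> cj n (inv\<^bsub>G\<^esub> x) = inv\<^bsub>G\<^esub> (cj n x)"
  unfolding cj_def by (simp add: gsimps Gp.int_pow_neg)
lemma cj_one: "cj n \<one>\<^bsub>G\<^esub> = \<one>\<^bsub>G\<^esub>"
  unfolding cj_def by (simp add: gsimps Gp.int_pow_neg)
lemma cj_0: "x \<in> carrier G \<Longrightarrow> cj 0 x = x"
  unfolding cj_def by simp
lemma cj_cj: "x \<in> carrier G \<Longrightarrow> cj m (cj n x) = cj (m + n) x"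
proof -
  assume x: "x \<in> carrier G"
  have "b [^]\<^bsub>G\<^esub> (m + n) = b [^]\<^bsub>G\<^esub> m \<otimes>\<^bsub>G\<^esub> b [^]\<^bsub>G\<^esub> n"
    "b [^]\<^bsub>G\<^esub> (- (m + n)) = b [^]\<^bsub>G\<^esub> (-n) \<otimes>\<^bsub>G\<^esub> b [^]\<^bsub>G\<^esub> (- m)"
    using Gp.int_pow_mult[OF b_carr, of m n] Gp.int_pow_mult[OF b_carr, of "-n" "-m"] by (simp_all add: add.commute)
  thus ?thesis unfolding cj_def using x by (simp add: Gp.m_assoc)
qed

lemma cj1_Dis: "x \<in> Dis a1 a2 a3 \<Longrightarrow> cj 1 x \<in> Dis a1 a2 a3"
  unfolding Dis_eq
proof (rule Gp.gen_hom_closed[OF GEN_carr, where f="cj 1"])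
  fix x assume "x \<in> GEN"
  then obtain y z where "x = D y \<otimes>\<^bsub>G\<^esub> inv\<^bsub>G\<^esub> D z" unfolding GEN_def by blast
  hence "cj 1 x = D (Op y (Gen astar)) \<otimes>\<^bsub>G\<^esub> inv\<^bsub>G\<^esub> D (Op z (Gen astar))"
    by (simp add: cj_mult cj_inv cj1_D)
  thus "cj 1 x \<in> generate G GEN" unfolding GEN_def by (blast intro: generate.incl)
qed (auto simp: cj_mult cj_inv cj_one)

lemma cjm1_Dis: "x \<in> Dis a1 a2 a3 \<Longrightarrow> cj (-1) x \<in> Dis a1 a2 a3"
  unfolding Dis_eq
proof (rule Gp.gen_hom_closed[OF GEN_carr, where f="cj (-1)"])
  fix x assume "x \<in> GEN"
  then obtain y z where "x = D y \<otimes>\<^bsub>G\<^esub> inv\<^bsub>G\<^esub> D z" unfolding GEN_def by blast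
  hence "cj (-1) x = D (OpInv y (Gen astar)) \<otimes>\<^bsub>G\<^esub> inv\<^bsub>G\<^esub> D (OpInv z (Gen astar))"
    by (simp add: cj_mult cj_inv cjm1_D)
  thus "cj (-1) x \<in> generate G GEN" unfolding GEN_def by (blast intro: generate.incl)
qed (auto simp: cj_mult cj_inv cj_one)

lemma cj_Dis: assumes x: "x \<in> Dis a1 a2 a3" shows "cj n x \<in> Dis a1 a2 a3"
proof (induction n rule: int_induct[where k=0])
  case base thus ?case using x by (simp add: cj_0 Dis_carr)
next
  case (step1 i)
  hence "cj 1 (cj i x) \<in> Dis a1 a2 a3" by (simp add: cj1_Dis)
  moreover have "cj 1 (cj i x) = cj (i + 1) x" using cj_cj[OF Dis_carr[OF x], of 1 i] by (simp add: add.commute)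
  ultimately show ?case by simp
next
  case (step2 i)
  hence "cj (-1) (cj i x) \<in> Dis a1 a2 a3" by (simp add: cjm1_Dis)
  moreover have "cj (-1) (cj i x) = cj (i - 1) x" using cj_cj[OF Dis_carr[OF x], of "-1" i] by simp
  ultimately show ?case by simp
qed


abbreviation "DG \<equiv> G\<lparr>carrier := Dis a1 a2 a3\<rparr>"

lemma DG_comm: "comm_group DG"
proof (rule group.group_comm_groupI)
  show "group DG" by (rule subgroup.subgroup_is_group[OF Dis_sub grp])
qed (simp add: Dis_comm)

interpretation DGc: comm_group DG by (rule DG_comm)

lemma pow_Dis: "x \<in> Dis a1 a2 a3 \<Longrightarrow> x [^]\<^bsub>G\<^esub> (k::int) \<in> Dis a1 a2 a3"
  by (rule Gp.subgroup_int_pow_closed[OF Dis_sub])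

lemma inv_Dis: "x \<in> Dis a1 a2 a3 \<Longrightarrow> inv\<^bsub>G\<^esub> x \<in> Dis a1 a2 a3"
  by (rule subgroup.m_inv_closed[OF Dis_sub])
lemma mult_Dis: "x \<in> Dis a1 a2 a3 \<Longrightarrow> y \<in> Dis a1 a2 a3 \<Longrightarrow> x \<otimes>\<^bsub>G\<^esub> y \<in> Dis a1 a2 a3"
  by (rule subgroup.m_closed[OF Dis_sub])
lemma one_Dis: "\<one>\<^bsub>G\<^esub> \<in> Dis a1 a2 a3"
  by (rule subgroup.one_closed[OF Dis_sub])

definition act :: "laurent \<Rightarrow> ('a qterm set \<Rightarrow> 'a qterm set) \<Rightarrow> ('a qterm set \<Rightarrow> 'a qterm set)" where
  "act l d = dis_smult a1 a2 a3 astar l d"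

lemma act_foldr: "act l d = foldr (\<lambda>n acc. (cj n d [^]\<^bsub>G\<^esub> (Poly_Mapping.lookup l n)) \<otimes>\<^bsub>G\<^esub> acc)
       (sorted_list_of_set (Poly_Mapping.keys l)) \<one>\<^bsub>G\<^esub>"
  unfolding act_def dis_smult_def Let_def mq_gen_cls B_def[symmetric] b_def[symmetric] cj_def ..

lemma foldr_fp: "distinct xs \<Longrightarrow> (\<And>n. n \<in> set xs \<Longrightarrow> f n \<in> Dis a1 a2 a3) \<Longrightarrow>
   foldr (\<lambda>n acc. f n \<otimes>\<^bsub>G\<^esub> acc) xs \<one>\<^bsub>G\<^esub> = finprod DG f (set xs)"
proof (induction xs)
  case Nil thus ?case by simp
next
  case (Cons a xs)
  have "finprod DG f (set (a # xs)) = f a \<otimes>\<^bsub>DG\<^esub> finprod DG f (set xs)"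
    using Cons.prems by (simp add: Pi_def)
  thus ?case using Cons by simp
qed

abbreviation tm :: "laurent \<Rightarrow> ('a qterm set \<Rightarrow> 'a qterm set) \<Rightarrow> int \<Rightarrow> ('a qterm set \<Rightarrow> 'a qterm set)"
  where "tm l d n \<equiv> cj n d [^]\<^bsub>G\<^esub> (Poly_Mapping.lookup l n)"

lemma tm_Dis: "d \<in> Dis a1 a2 a3 \<Longrightarrow> tm l d n \<in> Dis a1 a2 a3"
  using pow_Dis cj_Dis by blast

lemma act_fp: "d \<in> Dis a1 a2 a3 \<Longrightarrow> act l d = finprod DG (tm l d) (Poly_Mapping.keys l)"
  unfolding act_foldr by (subst foldr_fp) (auto simp: tm_Dis)

lemma act_K: assumes d: "d \<in> Dis a1 a2 a3" and K: "finite K" "Poly_Mapping.keys l \<subseteq> K"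
  shows "act l d = finprod DG (tm l d) K"
  unfolding act_fp[OF d]
proof (rule DGc.finprod_mono_neutral_cong_left[OF K])
  fix i assume "i \<in> K - Poly_Mapping.keys l"
  hence "Poly_Mapping.lookup l i = 0" by (simp add: in_keys_iff)
  thus "tm l d i = \<one>\<^bsub>DG\<^esub>" by simp
qed (auto simp: tm_Dis[OF d])

lemma act_Dis: "d \<in> Dis a1 a2 a3 \<Longrightarrow> act l d \<in> Dis a1 a2 a3"
proof -
  assume d: "d \<in> Dis a1 a2 a3"
  have "tm l d \<in> Poly_Mapping.keys l \<rightarrow> carrier DG" using tm_Dis[OF d] by auto
  hence "finprod DG (tm l d) (Poly_Mapping.keys l) \<in> carrier DG" by (rule DGc.finprod_closed)
  thus ?thesis using act_fp[OF d] by simp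
qed

lemma act_add: assumes d: "d \<in> Dis a1 a2 a3"
  shows "act (l1 + l2) d = act l1 d \<otimes>\<^bsub>G\<^esub> act l2 d"
proof -
  let ?K = "Poly_Mapping.keys l1 \<union> Poly_Mapping.keys l2"
  have fK: "finite ?K" by simp
  have "act (l1 + l2) d = finprod DG (tm (l1 + l2) d) ?K"
    by (rule act_K[OF d fK keys_add])
  also have "\<dots> = finprod DG (\<lambda>n. tm l1 d n \<otimes>\<^bsub>DG\<^esub> tm l2 d n) ?K"
    using d by (intro DGc.finprod_cong') (auto simp: lookup_add Gp.int_pow_mult cj_Dis Dis_carr tm_Dis intro: mult_Dis)
  also have "\<dots> = finprod DG (tm l1 d) ?K \<otimes>\<^bsub>DG\<^esub> finprod DG (tm l2 d) ?K"
    by (rule DGc.finprod_multf) (auto simp: tm_Dis[OF d])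
  also have "\<dots> = act l1 d \<otimes>\<^bsub>G\<^esub> act l2 d"
    using act_K[OF d fK, of l1] act_K[OF d fK, of l2] by simp
  finally show ?thesis .
qed

lemma act_0: "d \<in> Dis a1 a2 a3 \<Longrightarrow> act 0 d = \<one>\<^bsub>G\<^esub>"
  by (simp add: act_fp)

lemma act_single: assumes d: "d \<in> Dis a1 a2 a3" shows "act (Poly_Mapping.single k 1) d = cj k d"
proof -
  have k: "Poly_Mapping.keys (Poly_Mapping.single k (1::int)) = {k}" by simp
  have "act (Poly_Mapping.single k 1) d = finprod DG (tm (Poly_Mapping.single k 1) d) {k}"
    unfolding act_fp[OF d] k ..
  also have "\<dots> = tm (Poly_Mapping.single k 1) d k \<otimes>\<^bsub>DG\<^esub> finprod DG (tm (Poly_Mapping.single k 1) d) {}"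
    by (rule DGc.finprod_insert) (auto intro: pow_Dis cj_Dis d)
  also have "\<dots> = cj k d" using d by (simp add: cj_Dis Dis_carr)
  finally show ?thesis .
qed

lemma act_diff: assumes d: "d \<in> Dis a1 a2 a3"
  shows "act (l1 - l2) d = act l1 d \<otimes>\<^bsub>G\<^esub> inv\<^bsub>G\<^esub> act l2 d"
proof -
  have "act l1 d = act (l1 - l2) d \<otimes>\<^bsub>G\<^esub> act l2 d" using act_add[OF d, of "l1 - l2" l2] by simp
  moreover have "act l1 d \<in> carrier G" "act l2 d \<in> carrier G" "act (l1 - l2) d \<in> carrier G"
    using act_Dis[OF d] Dis_carr by auto
  ultimately show ?thesis using Gp.inv_solve_right by blast
qed

lemma act_mult: assumes d: "d \<in> Dis a1 a2 a3" and e: "e \<in> Dis a1 a2 a3"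
  shows "act l (d \<otimes>\<^bsub>G\<^esub> e) = act l d \<otimes>\<^bsub>G\<^esub> act l e"
proof -
  have de: "d \<otimes>\<^bsub>G\<^esub> e \<in> Dis a1 a2 a3" using d e by (rule mult_Dis)
  have "act l (d \<otimes>\<^bsub>G\<^esub> e) = finprod DG (tm l (d \<otimes>\<^bsub>G\<^esub> e)) (Poly_Mapping.keys l)"
    by (rule act_fp[OF de])
  also have "\<dots> = finprod DG (\<lambda>n. tm l d n \<otimes>\<^bsub>DG\<^esub> tm l e n) (Poly_Mapping.keys l)"
  proof (intro DGc.finprod_cong')
    fix n
    have "cj n d \<in> Dis a1 a2 a3" "cj n e \<in> Dis a1 a2 a3" using d e by (auto simp: cj_Dis)
    thus "tm l (d \<otimes>\<^bsub>G\<^esub> e) n = tm l d n \<otimes>\<^bsub>DG\<^esub> tm l e n"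
      using d e by (simp add: cj_mult Dis_carr Gp.int_pow_mult_distrib Dis_comm)
  qed (auto simp: tm_Dis d e intro: mult_Dis)
  also have "\<dots> = finprod DG (tm l d) (Poly_Mapping.keys l) \<otimes>\<^bsub>DG\<^esub> finprod DG (tm l e) (Poly_Mapping.keys l)"
    by (rule DGc.finprod_multf) (auto simp: tm_Dis d e)
  also have "\<dots> = act l d \<otimes>\<^bsub>G\<^esub> act l e" using act_fp d e by simp
  finally show ?thesis .
qed

lemma act_one: "act l \<one>\<^bsub>G\<^esub> = \<one>\<^bsub>G\<^esub>"
proof -
  have "act l \<one>\<^bsub>G\<^esub> = act l \<one>\<^bsub>G\<^esub> \<otimes>\<^bsub>G\<^esub> act l \<one>\<^bsub>G\<^esub>"
    using act_mult[OF one_Dis one_Dis] by simp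
  thus ?thesis using act_Dis[OF one_Dis] Dis_carr by (metis Gp.l_cancel_one' Gp.one_closed)
qed

lemma act_inv: assumes d: "d \<in> Dis a1 a2 a3" shows "act l (inv\<^bsub>G\<^esub> d) = inv\<^bsub>G\<^esub> act l d"
proof -
  have "act l (inv\<^bsub>G\<^esub> d) \<otimes>\<^bsub>G\<^esub> act l d = \<one>\<^bsub>G\<^esub>"
    using act_mult[OF inv_Dis[OF d] d] d Dis_carr act_one by simp
  thus ?thesis using act_Dis d inv_Dis Dis_carr by (simp add: Gp.inv_equality)
qed

lemma cj_act: assumes d: "d \<in> Dis a1 a2 a3"
  shows "cj n (act l d) = act (Poly_Mapping.single n 1 * l) d"
  using subset_UNIV[of "Poly_Mapping.keys l"]
proof (induction l rule: frag_induction)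
  case zero thus ?case using d by (simp add: act_0 cj_one)
next
  case (one x) thus ?case using d by (simp add: act_single mult_single cj_cj Dis_carr)
next
  case (diff a c)
  have "cj n (act (a - c) d) = cj n (act a d) \<otimes>\<^bsub>G\<^esub> inv\<^bsub>G\<^esub> cj n (act c d)"
    using d act_Dis Dis_carr by (simp add: act_diff cj_mult cj_inv)
  thus ?case using diff d by (simp add: right_diff_distrib act_diff)
qed

lemma act_act: assumes d: "d \<in> Dis a1 a2 a3"
  shows "act (l1 * l2) d = act l1 (act l2 d)"
  using subset_UNIV[of "Poly_Mapping.keys l1"]
proof (induction l1 rule: frag_induction)
  case zero thus ?case using d act_Dis by (simp add: act_0)
next
  case (one x) thus ?case using d act_Dis by (simp add: act_single cj_act)
next
  case (diff a c) thus ?case using d act_Dis by (simp add: left_diff_distrib act_diff)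
qed

lemma act_1: "d \<in> Dis a1 a2 a3 \<Longrightarrow> act 1 d = d"
  using act_single[of d 0] by (simp add: cj_0 Dis_carr)


definition phi :: "('a \<Rightarrow> laurent) \<Rightarrow> ('a qterm set \<Rightarrow> 'a qterm set)" where
  "phi v = finprod DG (\<lambda>a. act (v a) (D (Gen a))) UNIV"

lemma phi_f: "(\<lambda>a. act (v a) (D (Gen a))) \<in> UNIV \<rightarrow> carrier DG"
  using act_Dis D_Dis by simp

lemma phi_Dis: "phi v \<in> Dis a1 a2 a3"
  using DGc.finprod_closed[OF phi_f] unfolding phi_def by simp

lemma phi_add: "phi (v + w) = phi v \<otimes>\<^bsub>G\<^esub> phi w"
proof -
  have "phi (v + w) = finprod DG (\<lambda>a. act (v a) (D (Gen a)) \<otimes>\<^bsub>DG\<^esub> act (w a) (D (Gen a))) UNIV"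
    unfolding phi_def by (simp add: act_add D_Dis)
  also have "\<dots> = phi v \<otimes>\<^bsub>G\<^esub> phi w"
    unfolding phi_def using DGc.finprod_multf[OF phi_f phi_f] by simp
  finally show ?thesis .
qed

lemma phi_0: "phi 0 = \<one>\<^bsub>G\<^esub>"
proof -
  have "(\<lambda>a. act ((0::'a \<Rightarrow> laurent) a) (D (Gen a))) = (\<lambda>a. \<one>\<^bsub>DG\<^esub>)"
    by (auto simp: act_0 D_Dis)
  thus ?thesis unfolding phi_def using DGc.finprod_one[of UNIV] by simp
qed

lemma phi_0': "phi (\<lambda>a. 0) = \<one>\<^bsub>G\<^esub>"
  using phi_0 by (simp add: zero_fun_def)

lemma phi_diff: "phi (v - w) = phi v \<otimes>\<^bsub>G\<^esub> inv\<^bsub>G\<^esub> phi w"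
proof -
  have "phi v = phi (v - w) \<otimes>\<^bsub>G\<^esub> phi w" using phi_add[of "v - w" w] by simp
  moreover have "phi v \<in> carrier G" "phi w \<in> carrier G" "phi (v - w) \<in> carrier G"
    using phi_Dis Dis_carr by auto
  ultimately show ?thesis using Gp.inv_solve_right by blast
qed

lemma act_finprod: assumes "finite A" shows "f \<in> A \<rightarrow> Dis a1 a2 a3 \<Longrightarrow>
   act l (finprod DG f A) = finprod DG (\<lambda>a. act l (f a)) A"
  using assms
proof (induction A rule: finite_induct)
  case empty thus ?case by (simp add: act_one)
next
  case (insert x F)
  have fF: "f \<in> F \<rightarrow> carrier DG" "f x \<in> carrier DG" using insert by auto
  have gF: "(\<lambda>a. act l (f a)) \<in> F \<rightarrow> carrier DG" "act l (f x) \<in> carrier DG" using insert act_Dis by auto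
  have "act l (finprod DG f (insert x F)) = act l (f x \<otimes>\<^bsub>G\<^esub> finprod DG f F)"
    using DGc.finprod_insert[OF insert(1,2) fF] by simp
  also have "\<dots> = act l (f x) \<otimes>\<^bsub>G\<^esub> act l (finprod DG f F)"
    using fF DGc.finprod_closed[OF fF(1)] by (simp add: act_mult)
  also have "\<dots> = finprod DG (\<lambda>a. act l (f a)) (insert x F)"
    using DGc.finprod_insert[OF insert(1,2) gF] insert by simp
  finally show ?case .
qed

lemma phi_vscale: "phi (vscale l v) = act l (phi v)"
proof -
  have "act l (phi v) = finprod DG (\<lambda>a. act l (act (v a) (D (Gen a)))) UNIV"
    unfolding phi_def by (rule act_finprod) (use act_Dis D_Dis in auto)
  also have "\<dots> = phi (vscale l v)"
    unfolding phi_def vscale_def by (simp add: act_act D_Dis)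
  finally show ?thesis by simp
qed

lemma phi_delta: "phi (delta a) = D (Gen a)"
proof -
  have "phi (delta a) = finprod DG (\<lambda>x. if a = x then D (Gen x) else \<one>\<^bsub>DG\<^esub>) UNIV"
    unfolding phi_def delta_def
    by (rule DGc.finprod_cong') (auto simp: act_0 act_1 D_Dis one_Dis)
  also have "\<dots> = D (Gen a)"
    by (rule DGc.finprod_singleton) (auto simp: D_Dis)
  finally show ?thesis .
qed

lemma phi_sum: "finite A \<Longrightarrow> phi (\<Sum>c\<in>A. f c) = finprod DG (\<lambda>c. phi (f c)) A"
proof (induction A rule: finite_induct)
  case empty thus ?case by (simp add: phi_0 phi_0')
next
  case (insert x F)
  have "(\<lambda>c. phi (f c)) \<in> F \<rightarrow> carrier DG" "phi (f x) \<in> carrier DG" using phi_Dis by auto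
  hence fp: "finprod DG (\<lambda>c. phi (f c)) (insert x F) = phi (f x) \<otimes>\<^bsub>G\<^esub> finprod DG (\<lambda>c. phi (f c)) F"
    using DGc.finprod_insert[OF insert(1,2)] by simp
  have "phi (sum f (insert x F)) = phi (f x + sum f F)"
    by (simp only: sum.insert[OF insert(1,2)])
  also have "\<dots> = phi (f x) \<otimes>\<^bsub>G\<^esub> phi (sum f F)" by (rule phi_add)
  finally show ?case using fp insert(3) by simp
qed

lemma dcomm3: assumes "x \<in> Dis a1 a2 a3" "y \<in> Dis a1 a2 a3" "z \<in> Dis a1 a2 a3"
  shows "x \<otimes>\<^bsub>G\<^esub> inv\<^bsub>G\<^esub> y \<otimes>\<^bsub>G\<^esub> z \<otimes>\<^bsub>G\<^esub> inv\<^bsub>G\<^esub> (x \<otimes>\<^bsub>G\<^esub> z \<otimes>\<^bsub>G\<^esub> inv\<^bsub>G\<^esub> y) = \<one>\<^bsub>G\<^esub>"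
proof -
  have c: "x \<in> carrier G" "y \<in> carrier G" "z \<in> carrier G" using assms Dis_carr by auto
  have "inv\<^bsub>G\<^esub> y \<otimes>\<^bsub>G\<^esub> z = z \<otimes>\<^bsub>G\<^esub> inv\<^bsub>G\<^esub> y"
    using Dis_comm assms inv_Dis by blast
  hence "x \<otimes>\<^bsub>G\<^esub> inv\<^bsub>G\<^esub> y \<otimes>\<^bsub>G\<^esub> z = x \<otimes>\<^bsub>G\<^esub> z \<otimes>\<^bsub>G\<^esub> inv\<^bsub>G\<^esub> y"
    using c by (simp add: Gp.m_assoc)
  thus ?thesis using c by simp
qed

lemma phi_rho: "phi (tau \<circ> rhoD kappa a1 a2 a3 c) = \<one>\<^bsub>G\<^esub>"
proof -
  let ?d1 = "D (Gen (a1 c))" and ?d2 = "D (Gen (a2 c))" and ?d3 = "D (Gen (a3 c))"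
  have d: "?d1 \<in> Dis a1 a2 a3" "?d2 \<in> Dis a1 a2 a3" "?d3 \<in> Dis a1 a2 a3" by (auto simp: D_Dis)
  have lt: "lt = Poly_Mapping.single 1 1" by (simp add: lt_def)
  have "phi (tau \<circ> rhoD kappa a1 a2 a3 c) = act (1 - lt) ?d1 \<otimes>\<^bsub>G\<^esub> act lt ?d2 \<otimes>\<^bsub>G\<^esub> inv\<^bsub>G\<^esub> ?d3"
    by (simp add: tau_rho phi_diff phi_add phi_vscale phi_delta)
  also have "act (1 - lt) ?d1 = ?d1 \<otimes>\<^bsub>G\<^esub> inv\<^bsub>G\<^esub> cj 1 ?d1"
    using d by (simp add: act_diff act_1 act_single lt)
  also have "act lt ?d2 = cj 1 ?d2" using d by (simp add: act_single lt)
  also have "?d3 = D (Op (Gen (a2 c)) (Gen (a1 c)))"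
    unfolding D_def by (simp add: B_cong[OF mq_eq.sym[OF mq_eq.crossing]])
  also have "\<dots> = ?d1 \<otimes>\<^bsub>G\<^esub> cj 1 ?d2 \<otimes>\<^bsub>G\<^esub> inv\<^bsub>G\<^esub> cj 1 ?d1"
    by (simp add: D_Op cj_mult cj_inv Gp.m_assoc)
  also have "?d1 \<otimes>\<^bsub>G\<^esub> inv\<^bsub>G\<^esub> cj 1 ?d1 \<otimes>\<^bsub>G\<^esub> cj 1 ?d2 \<otimes>\<^bsub>G\<^esub> inv\<^bsub>G\<^esub> (?d1 \<otimes>\<^bsub>G\<^esub> cj 1 ?d2 \<otimes>\<^bsub>G\<^esub> inv\<^bsub>G\<^esub> cj 1 ?d1) = \<one>\<^bsub>G\<^esub>"
    by (rule dcomm3[OF d(1) cj_Dis[OF d(1), of 1] cj_Dis[OF d(2), of 1]])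
  finally show ?thesis .
qed

lemma phi_rel: "r \<in> relsub kappa a1 a2 a3 \<Longrightarrow> phi r = \<one>\<^bsub>G\<^esub>"
proof -
  assume "r \<in> relsub kappa a1 a2 a3"
  then obtain lam where r: "r = (\<Sum>c\<in>UNIV. vscale (lam c) (tau \<circ> rhoD kappa a1 a2 a3 c))"
    unfolding relsub_def by blast
  have "phi r = finprod DG (\<lambda>c. phi (vscale (lam c) (tau \<circ> rhoD kappa a1 a2 a3 c))) UNIV"
    unfolding r by (rule phi_sum) simp
  also have "\<dots> = \<one>\<^bsub>DG\<^esub>"
  proof (rule DGc.finprod_one_eqI)
    fix c show "phi (vscale (lam c) (tau \<circ> rhoD kappa a1 a2 a3 c)) = \<one>\<^bsub>DG\<^esub>"
      by (simp only: phi_vscale phi_rho act_one) simp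
  qed
  finally show ?thesis by simp
qed

lemma vscale_0: "vscale (0::laurent) v = 0" unfolding vscale_def zero_fun_def by simp

lemma zero_relsub: "0 \<in> relsub kappa a1 a2 a3"
proof -
  have z: "(\<lambda>c. vscale 0 (tau \<circ> rhoD kappa a1 a2 a3 c)) = (\<lambda>c. 0)"
    by (simp only: vscale_0)
  have z2: "(\<Sum>c\<in>UNIV. vscale 0 (tau \<circ> rhoD kappa a1 a2 a3 c)) = 0"
    unfolding z by (rule sum.neutral_const)
  show ?thesis unfolding relsub_def
  proof (rule image_eqI[of _ _ "\<lambda>c. 0"])
    show "0 = (\<Sum>c\<in>UNIV. vscale ((\<lambda>c::'c. 0::laurent) c) (tau \<circ> rhoD kappa a1 a2 a3 c))"
      by (simp only: z2)
  qed (rule UNIV_I)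
qed

definition e :: "('a \<Rightarrow> laurent) set \<Rightarrow> ('a qterm set \<Rightarrow> 'a qterm set)" where
  "e X = phi (SOME x. x \<in> X)"

lemma e_mcls: "e (mcls kappa a1 a2 a3 v) = phi v"
proof -
  have "v = v + 0" by simp
  hence "v \<in> mcls kappa a1 a2 a3 v" unfolding mcls_def using zero_relsub by blast
  hence "(SOME x. x \<in> mcls kappa a1 a2 a3 v) \<in> mcls kappa a1 a2 a3 v"
    by (rule someI[where P="\<lambda>x. x \<in> mcls kappa a1 a2 a3 v"])
  then obtain r where r: "(SOME x. x \<in> mcls kappa a1 a2 a3 v) = v + r" "r \<in> relsub kappa a1 a2 a3"
    unfolding mcls_def by blast
  show ?thesis unfolding e_def r(1) phi_add phi_rel[OF r(2)] using phi_Dis Dis_carr by simp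
qed


lemma phi_inv: "inv\<^bsub>G\<^esub> phi w = phi (0 - w)"
  by (simp only: phi_diff phi_0) (simp add: phi_Dis Dis_carr)

lemma cj_phi: "cj k (phi v) = phi (vscale (Poly_Mapping.single k 1) v)"
  by (simp add: phi_vscale act_single phi_Dis)

lemma D_range: "D y \<in> range phi"
proof (induction y)
  case (Gen a)
  show ?case by (simp only: phi_delta[symmetric] rangeI)
next
  case (Op x y)
  then obtain u w where u: "D x = phi u" and w: "D y = phi w" by blast
  have "D (Op x y) = phi w \<otimes>\<^bsub>G\<^esub> cj 1 (phi u \<otimes>\<^bsub>G\<^esub> phi (0 - w))"
    by (simp only: D_Op u w phi_inv)
  also have "\<dots> = phi (w + vscale (Poly_Mapping.single 1 1) (u + (0 - w)))"
    by (simp only: phi_add[symmetric] cj_phi)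
  finally show ?case by (simp only: rangeI)
next
  case (OpInv x y)
  then obtain u w where u: "D x = phi u" and w: "D y = phi w" by blast
  have "D (OpInv x y) = cj (-1) (phi (0 - w) \<otimes>\<^bsub>G\<^esub> phi u) \<otimes>\<^bsub>G\<^esub> phi w"
    by (simp only: D_OpInv u w phi_inv)
  also have "\<dots> = phi (vscale (Poly_Mapping.single (-1) 1) ((0 - w) + u) + w)"
    by (simp only: phi_add[symmetric] cj_phi)
  finally show ?case by (simp only: rangeI)
qed

lemma range_phi_sub: "subgroup (range phi) G"
proof (rule subgroup.intro)
  show "range phi \<subseteq> carrier G" using phi_Dis Dis_carr by auto
next
  fix x y assume "x \<in> range phi" "y \<in> range phi"
  then obtain u w where "x = phi u" "y = phi w" by blast
  thus "x \<otimes>\<^bsub>G\<^esub> y \<in> range phi" by (simp only: phi_add[symmetric] rangeI)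
next
  show "\<one>\<^bsub>G\<^esub> \<in> range phi" by (simp only: phi_0[symmetric] rangeI)
next
  fix x assume "x \<in> range phi"
  then obtain u where "x = phi u" by blast
  thus "inv\<^bsub>G\<^esub> x \<in> range phi" by (simp only: phi_inv rangeI)
qed

lemma Dis_range: "Dis a1 a2 a3 \<subseteq> range phi"
  unfolding Dis_eq
proof (rule Gp.generate_subgroup_incl[OF _ range_phi_sub])
  show "GEN \<subseteq> range phi"
  proof
    fix g assume "g \<in> GEN"
    then obtain y z where g: "g = D y \<otimes>\<^bsub>G\<^esub> inv\<^bsub>G\<^esub> D z" unfolding GEN_def by blast
    obtain u w where "D y = phi u" "D z = phi w" using D_range by blast
    hence "g = phi (u + (0 - w))" by (simp only: g phi_inv phi_add)
    thus "g \<in> range phi" by (simp only: rangeI)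
  qed
qed

lemma phi_gen: "phi (delta a - delta astar) = D (Gen a)"
  by (simp only: phi_diff phi_delta D_star) (simp add: D_Dis Dis_carr)

lemma main: "(\<forall>X\<in>M0 kappa a1 a2 a3 astar. e X \<in> Dis a1 a2 a3)
           \<and> (\<forall>X\<in>M0 kappa a1 a2 a3 astar. \<forall>Y\<in>M0 kappa a1 a2 a3 astar.
                 e (madd kappa a1 a2 a3 X Y) = e X \<otimes>\<^bsub>PermG a1 a2 a3\<^esub> e Y)
           \<and> (\<forall>l. \<forall>X\<in>M0 kappa a1 a2 a3 astar.
                 e (msmult kappa a1 a2 a3 l X) = dis_smult a1 a2 a3 astar l (e X))
           \<and> e ` M0 kappa a1 a2 a3 astar = Dis a1 a2 a3
           \<and> (\<forall>a. e (mcls kappa a1 a2 a3 (delta a - delta astar)) = dgen a1 a2 a3 astar a)"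
proof (intro conjI ballI allI)
  fix X assume "X \<in> M0 kappa a1 a2 a3 astar"
  show "e X \<in> Dis a1 a2 a3" unfolding e_def by (rule phi_Dis)
next
  fix X Y
  show "e (madd kappa a1 a2 a3 X Y) = e X \<otimes>\<^bsub>G\<^esub> e Y"
    unfolding madd_def e_mcls phi_add by (simp add: e_def)
next
  fix l X
  show "e (msmult kappa a1 a2 a3 l X) = dis_smult a1 a2 a3 astar l (e X)"
    unfolding msmult_def e_mcls phi_vscale by (simp add: e_def act_def)
next
  fix a
  show "e (mcls kappa a1 a2 a3 (delta a - delta astar)) = dgen a1 a2 a3 astar a"
    unfolding e_mcls phi_gen dgen_def D_def b_def B_def mq_gen_cls ..
next
  show "e ` M0 kappa a1 a2 a3 astar = Dis a1 a2 a3"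
  proof
    show "e ` M0 kappa a1 a2 a3 astar \<subseteq> Dis a1 a2 a3" unfolding e_def using phi_Dis by auto
  next
    show "Dis a1 a2 a3 \<subseteq> e ` M0 kappa a1 a2 a3 astar"
    proof
      fix g assume "g \<in> Dis a1 a2 a3"
      then obtain v where g: "g = phi v" using Dis_range by blast
      let ?X = "mcls kappa a1 a2 a3 (\<Sum>a\<in>UNIV. vscale (v a) (delta a - delta astar))"
      have X: "?X \<in> M0 kappa a1 a2 a3 astar" unfolding M0_def by blast
      have "e ?X = finprod DG (\<lambda>a. phi (vscale (v a) (delta a - delta astar))) UNIV"
        unfolding e_mcls by (rule phi_sum) simp
      also have "\<dots> = g" unfolding g phi_def[of v]
        by (rule DGc.finprod_cong') (simp_all add: phi_vscale phi_gen act_Dis D_Dis)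
      finally have "e ?X = g" .
      from image_eqI[where f=e, OF this[symmetric] X] show "g \<in> e ` M0 kappa a1 a2 a3 astar" .
    qed
  qed
qed

end

theorem corollary30:
  fixes mu :: nat
    and kappa :: "'a::finite \<Rightarrow> nat"
    and a1 a2 a3 :: "'c::finite \<Rightarrow> 'a"
    and astar :: 'a
  assumes "\<forall>a. kappa a \<in> {1..mu}"
  shows "\<exists>e. (\<forall>X\<in>M0 kappa a1 a2 a3 astar. e X \<in> Dis a1 a2 a3)
           \<and> (\<forall>X\<in>M0 kappa a1 a2 a3 astar. \<forall>Y\<in>M0 kappa a1 a2 a3 astar.
                 e (madd kappa a1 a2 a3 X Y) = e X \<otimes>\<^bsub>PermG a1 a2 a3\<^esub> e Y)
           \<and> (\<forall>l. \<forall>X\<in>M0 kappa a1 a2 a3 astar.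
                 e (msmult kappa a1 a2 a3 l X) = dis_smult a1 a2 a3 astar l (e X))
           \<and> e ` M0 kappa a1 a2 a3 astar = Dis a1 a2 a3
           \<and> (\<forall>a. e (mcls kappa a1 a2 a3 (delta a - delta astar)) = dgen a1 a2 a3 astar a)"
  by (rule exI[where x="mqL.e a1 a2 a3 astar"]) (rule mqL.main)

end
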